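(* Consider four bosonic modes labelled $1,2,3,4$, and a beam-splitter network $\hat B_{\text{network}}=\hat B_{j_4k_4}\hat B_{j_3k_3}\hat B_{j_2k_2}\hat B_{j_1k_1}$ consisting of four balanced beam splitters, where $j_i\neq k_i\in\{1,2,3,4\}$ for each $i$ and the beam splitter $\hat B_{j_1k_1}$ acts first on the state, then $\hat B_{j_2k_2}$, and so on. Then $\hat B_{\text{network}}$ is a real balanced four-splitter if and only if all of the following hold: (1) each mode is acted on by exactly two of the four beam splitters; (2) all modes interact with a first beam splitter before any mode interacts with a second one (i.e., in the order of application, no beam splitter acts on a mode that has already been acted on while some mode has not yet been acted on by any beam splitter); (3) no two of the beam splitters act on the same (unordered) pair of modes.
   Context: For modes with annihilation operators $\hat a_j$ and quadratures $\hat q_j=(\hat a_j+\hat a_j^\dagger)/\sqrt2$, $\hat p_j=-i(\hat a_j-\hat a_j^\dagger)/\sqrt2$, the balanced beam splitter from mode $j$ to mode $k$ is $\hat B_{jk}=e^{\frac{\pi}{4}(\hat a_j\hat a_k^\dagger-\hat a_j^\dagger\hat a_k)}$ (note $\hat B_{kj}=\hat B_{jk}^\dagger$, so each beam splitter may point in either direction). A passive linear-optical unitary $\hat U$ on $N$ modes has matrix $\mathbf U\in\mathrm U(N)$ defined by $\hat U^\dagger\hat{\mathbf a}\hat U=\mathbf U\hat{\mathbf a}$; for $\hat B_{jk}$ this matrix equals the identity except on rows/columns $(j,k)$, where it is $\tfrac1{\sqrt2}\begin{bmatrix}1&-1\\1&1\end{bmatrix}$, and the matrix of the network is the product $\mathbf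 R_{j_4k_4}\mathbf R_{j_3k_3}\mathbf R_{j_2k_2}\mathbf R_{j_1k_1}$. A real balanced four-splitter is a linear-optical unitary on four modes whose matrix is real orthogonal with all entries of equal magnitude (hence $\pm\tfrac12$). *)

theory Defs
  imports "HOL-Analysis.Analysis" "HOL-Library.Numeral_Type"
begin

text \<open>Modes are the four elements of the numeral type 4 (standing for modes 1,2,3,4).\<close>

definition bs_matrix :: "4 \<Rightarrow> 4 \<Rightarrow> real^4^4" where
  "bs_matrix j k = (\<chi> r c.
     if r = j \<and> c = j then 1 / sqrt 2
     else if r = j \<and> c = k then - 1 / sqrt 2
     else if r = k \<and> c = j then 1 / sqrt 2
     else if r = k \<and> c = k then 1 / sqrt 2
     else if r = c then 1 else 0)"

definition network_matrix :: "(nat \<Rightarrow> 4) \<Rightarrow> (nat \<Rightarrow> 4) \<Rightarrow> real^4^4" where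
  "network_matrix j k =
     bs_matrix (j 4) (k 4) ** bs_matrix (j 3) (k 3) ** bs_matrix (j 2) (k 2) ** bs_matrix (j 1) (k 1)"

definition real_balanced_four_splitter :: "real^4^4 \<Rightarrow> bool" where
  "real_balanced_four_splitter M \<longleftrightarrow>
     orthogonal_matrix M \<and> (\<forall>a b c d. \<bar>M $ a $ b\<bar> = \<bar>M $ c $ d\<bar>)"

end

theory Submission
  imports Defs
begin

lemma num4_distinct: "(1::4) \<noteq> 2" "(1::4) \<noteq> 3" "(1::4) \<noteq> 4" "(2::4) \<noteq> 3" "(2::4) \<noteq> 4" "(3::4) \<noteq> 4"
  by simp_all

lemma bs_mv:
  assumes "j \<noteq> k"
  shows "(bs_matrix j k *v v) $ r = (if r = j then (v$j - v$k) / sqrt 2 else if r = k then (v$j + v$k) / sqrt 2 else v$r)"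
  using exhaust_4[of j] exhaust_4[of k] exhaust_4[of r] assms
  by (auto simp: matrix_vector_mult_def sum_4 bs_matrix_def diff_divide_distrib add_divide_distrib)

lemma net_col: "network_matrix j k $ r $ c =
   (bs_matrix (j 4) (k 4) *v (bs_matrix (j 3) (k 3) *v (bs_matrix (j 2) (k 2) *v (bs_matrix (j 1) (k 1) *v axis c 1)))) $ r"
proof -
  have e: "M $ r $ c = (M *v axis c 1) $ r" for M :: "real^4^4"
    by (simp add: matrix_vector_mult_basis column_def)
  show ?thesis unfolding e network_matrix_def by (simp only: matrix_vector_mul_assoc matrix_mul_assoc)
qed

lemma bs_entry_sym: "j \<noteq> k \<Longrightarrow> bs_matrix j k $ c $ r = bs_matrix k j $ r $ c"
  by (cases "r=j"; cases "r=k"; cases "c=j"; cases "c=k"; simp add: bs_matrix_def)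

lemma bs_transpose: "j \<noteq> k \<Longrightarrow> transpose (bs_matrix j k) = bs_matrix k j"
  by (simp add: vec_eq_iff transpose_def bs_entry_sym)


definition supp :: "real^4 \<Rightarrow> 4 set" where "supp v = {x. v$x \<noteq> 0}"
definition step :: "4 set \<Rightarrow> 4 set \<Rightarrow> 4 set" where "step S e = (if S \<inter> e = {} then S else S \<union> e)"

lemma supp_step:
  assumes jk: "j \<noteq> k" and sv: "supp v \<subseteq> S"
  shows "supp (bs_matrix j k *v v) \<subseteq> step S {j,k}"
proof
  fix x assume x: "x \<in> supp (bs_matrix j k *v v)"
  show "x \<in> step S {j,k}"
  proof (cases "S \<inter> {j,k} = {}")
    case True
    then have vj: "v$j = 0" "v$k = 0" using sv by (auto simp: supp_def)
    have "x \<notin> {j,k}" using x jk vj by (auto simp: supp_def bs_mv)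
    then have "v$x \<noteq> 0" using x jk by (auto simp: supp_def bs_mv)
    then show ?thesis using sv True by (auto simp: supp_def step_def)
  next
    case False
    show ?thesis
    proof (cases "x \<in> {j,k}")
      case True then show ?thesis using False by (auto simp: step_def)
    next
      case F2: False
      then have "v$x \<noteq> 0" using x jk by (auto simp: supp_def bs_mv)
      then show ?thesis using sv by (auto simp: supp_def step_def)
    qed
  qed
qed

lemma card_step: "card (step S {j,k}) \<le> card S + 1"
proof (cases "S \<inter> {j,k} = {}")
  case True then show ?thesis by (simp add: step_def)
next
  case False
  then have "S \<union> {j,k} = insert k S \<or> S \<union> {j,k} = insert j S" by auto
  then have "card (S \<union> {j,k}) \<le> card S + 1"
    by (metis Suc_eq_plus1 card_insert_le_m1 diff_Suc_1 finite zero_less_Suc card_insert_if le_refl le_SucI)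
  then show ?thesis using False by (simp add: step_def)
qed

lemma step_disj: "S \<inter> e = {} \<Longrightarrow> step S e = S" by (simp add: step_def)
lemma step_sub: "e \<subseteq> S \<Longrightarrow> step S e = S" by (auto simp: step_def)

lemma exists_out: "card (S::4 set) < 4 \<Longrightarrow> \<exists>r. r \<notin> S"
proof (rule ccontr)
  assume "card S < 4" "\<not> (\<exists>r. r \<notin> S)"
  then have "S = UNIV" by auto
  then show False using \<open>card S < 4\<close> by simp
qed

lemma net_zero:
  assumes d: "\<forall>i\<in>{1..4::nat}. j i \<noteq> k i"
    and c: "card (step (step (step (step {c} {j 1, k 1}) {j 2, k 2}) {j 3, k 3}) {j 4, k 4}) < 4"
  shows "\<exists>r. network_matrix j k $ r $ c = 0"
proof -
  have d1: "j 1 \<noteq> k 1" and d2: "j 2 \<noteq> k 2" and d3: "j 3 \<noteq> k 3" and d4: "j 4 \<noteq> k 4" using d by auto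
  have s0: "supp (axis c 1) \<subseteq> {c}" by (auto simp: supp_def axis_def)
  have s4: "supp (bs_matrix (j 4) (k 4) *v (bs_matrix (j 3) (k 3) *v (bs_matrix (j 2) (k 2) *v (bs_matrix (j 1) (k 1) *v axis c 1))))
     \<subseteq> step (step (step (step {c} {j 1, k 1}) {j 2, k 2}) {j 3, k 3}) {j 4, k 4}"
    by (intro supp_step d1 d2 d3 d4 s0)
  obtain r where "r \<notin> step (step (step (step {c} {j 1, k 1}) {j 2, k 2}) {j 3, k 3}) {j 4, k 4}"
    using exists_out[OF c] by blast
  then show ?thesis using s4 by (auto simp: net_col supp_def)
qed


lemma card_le3: "card {a,b,c::'a} \<le> 3"
  by (auto simp: card_insert_if)

lemma card_le2: "card {a,b::'a} \<le> 2"
  by (auto simp: card_insert_if)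

lemma bad12:
  assumes d: "\<forall>i\<in>{1..4::nat}. j i \<noteq> k i"
    and i: "{j 1, k 1} \<inter> {j 2, k 2} \<noteq> {}"
  shows "\<exists>r c. network_matrix j k $ r $ c = 0"
proof -
  have "{j 1, k 1} \<union> {j 2, k 2} = {j 1, k 1, j 2} \<or> {j 1, k 1} \<union> {j 2, k 2} = {j 1, k 1, k 2}"
    using i by auto
  then have "card ({j 1, k 1} \<union> {j 2, k 2}) \<le> 3" by (elim disjE) (metis card_le3)+
  then have "card ({j 1, k 1} \<union> {j 2, k 2}) < 4" by linarith
  then obtain c where c: "c \<notin> {j 1, k 1} \<union> {j 2, k 2}" using exists_out by blast
  have e: "step (step {c} {j 1, k 1}) {j 2, k 2} = {c}" using c by (simp add: step_disj)
  have "card (step (step (step (step {c} {j 1, k 1}) {j 2, k 2}) {j 3, k 3}) {j 4, k 4}) \<le> 3" (is "card ?S \<le> 3")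
    unfolding e using card_step[of "{c}" "j 3" "k 3"] card_step[of "step {c} {j 3, k 3}" "j 4" "k 4"] by simp
  then have "card ?S < 4" by linarith
  from net_zero[OF d this] show ?thesis by blast
qed

lemma bad_eq:
  assumes d: "\<forall>i\<in>{1..4::nat}. j i \<noteq> k i"
    and h: "\<forall>i\<in>{2,3,4::nat}. {j i, k i} \<subseteq> {j 1, k 1} \<or> {j i, k i} \<inter> {j 1, k 1} = {}"
  shows "\<exists>r c. network_matrix j k $ r $ c = 0"
proof -
  have st: "step {j 1, k 1} {j i, k i} = {j 1, k 1}" if "i \<in> {2,3,4}" for i
  proof -
    have "{j i, k i} \<subseteq> {j 1, k 1} \<or> {j i, k i} \<inter> {j 1, k 1} = {}" using h that by blast
    then show ?thesis by (elim disjE) (simp_all add: step_disj step_sub)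
  qed
  have e1: "step {j 1} {j 1, k 1} = {j 1, k 1}" by (auto simp: step_def)
  have "card (step (step (step (step {j 1} {j 1, k 1}) {j 2, k 2}) {j 3, k 3}) {j 4, k 4}) \<le> 2" (is "card ?S \<le> 2")
  proof -
    have s2: "step {j 1, k 1} {j 2, k 2} = {j 1, k 1}" by (rule st) simp
    have s3: "step {j 1, k 1} {j 3, k 3} = {j 1, k 1}" by (rule st) simp
    have s4: "step {j 1, k 1} {j 4, k 4} = {j 1, k 1}" by (rule st) simp
    show ?thesis unfolding e1 s2 s3 s4 by (rule card_le2)
  qed
  then have "card ?S < 4" by linarith
  from net_zero[OF d this] show ?thesis by blast
qed

lemma net_transpose:
  assumes d: "\<forall>i\<in>{1..4::nat}. j i \<noteq> k i"
  shows "network_matrix (\<lambda>i. k (5 - i)) (\<lambda>i. j (5 - i)) = transpose (network_matrix j k)"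
proof -
  have d1: "j 1 \<noteq> k 1" and d2: "j 2 \<noteq> k 2" and d3: "j 3 \<noteq> k 3" and d4: "j 4 \<noteq> k 4" using d by auto
  have n: "(5::nat) - 4 = 1" "(5::nat) - 3 = 2" "(5::nat) - 2 = 3" "(5::nat) - 1 = 4" by simp_all
  show ?thesis
    unfolding network_matrix_def
    by (simp only: n matrix_transpose_mul bs_transpose[OF d1] bs_transpose[OF d2] bs_transpose[OF d3] bs_transpose[OF d4] matrix_mul_assoc)
qed

lemma bad34:
  assumes d: "\<forall>i\<in>{1..4::nat}. j i \<noteq> k i"
    and i: "{j 3, k 3} \<inter> {j 4, k 4} \<noteq> {}"
  shows "\<exists>r c. network_matrix j k $ r $ c = 0"
proof -
  have d': "\<forall>i\<in>{1..4::nat}. k (5 - i) \<noteq> j (5 - i)"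
  proof
    fix i :: nat assume "i \<in> {1..4}"
    then have "5 - i \<in> {1..4}" by auto
    then show "k (5 - i) \<noteq> j (5 - i)" using d by metis
  qed
  have i': "{k (5 - 1), j (5 - 1)} \<inter> {k (5 - 2), j (5 - 2)} \<noteq> {}" using i by auto
  obtain r c where "network_matrix (\<lambda>i. k (5 - i)) (\<lambda>i. j (5 - i)) $ r $ c = 0"
    using bad12[of "\<lambda>i. k (5 - i)" "\<lambda>i. j (5 - i)", OF d'] i' by auto
  then have "network_matrix j k $ c $ r = 0" by (simp add: net_transpose[OF d] transpose_def)
  then show ?thesis by blast
qed

lemma balanced_nz:
  assumes "real_balanced_four_splitter M"
  shows "M $ r $ c \<noteq> 0"
proof
  assume z: "M $ r $ c = 0"
  have "M = 0" using assms z unfolding real_balanced_four_splitter_def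
    by (metis abs_eq_0 vec_eq_iff zero_index)
  then have "(transpose M ** M) $ 1 $ 1 = 0" by (simp add: matrix_matrix_mult_def)
  moreover have "(mat 1 :: real^4^4) $ 1 $ 1 = 1" by (simp add: mat_def)
  ultimately show False using assms unfolding real_balanced_four_splitter_def orthogonal_matrix
    by auto
qed


lemma sqrt2_sq: "sqrt 2 * sqrt 2 = (2::real)" by simp

lemma mm_col: "(A ** B) $ r $ c = (A *v (\<chi> i. B $ i $ c)) $ r"
  by (simp add: matrix_matrix_mult_def matrix_vector_mult_def)

lemma bs_inv: "j \<noteq> k \<Longrightarrow> bs_matrix k j ** bs_matrix j k = mat 1"
  unfolding vec_eq_iff
proof (intro allI)
  fix r c assume jk: "j \<noteq> k"
  have kj: "k \<noteq> j" using jk by simp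
  have e: "(bs_matrix k j ** bs_matrix j k) $ r $ c = (if r = k then (bs_matrix j k $ k $ c - bs_matrix j k $ j $ c) / sqrt 2
     else if r = j then (bs_matrix j k $ k $ c + bs_matrix j k $ j $ c) / sqrt 2 else bs_matrix j k $ r $ c)"
    unfolding mm_col bs_mv[OF kj] by simp
  show "(bs_matrix k j ** bs_matrix j k) $ r $ c = mat 1 $ r $ c"
    unfolding e using jk
    by (cases "r=j"; cases "r=k"; cases "c=j"; cases "c=k";
        simp add: bs_matrix_def mat_def field_simps)
qed

lemma bs_orth: "j \<noteq> k \<Longrightarrow> orthogonal_matrix (bs_matrix j k)"
  unfolding orthogonal_matrix_def by (simp add: bs_transpose bs_inv)

lemma magA: "j \<noteq> k \<Longrightarrow> c \<in> {j,k} \<Longrightarrow> \<bar>(bs_matrix j k *v axis c 1) $ x\<bar> = (if x \<in> {j,k} then 1 / sqrt 2 else 0)"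
  by (auto simp: bs_mv axis_def)

lemma magB: "j \<noteq> k \<Longrightarrow> v $ j = 0 \<Longrightarrow> v $ k = 0 \<Longrightarrow> bs_matrix j k *v v = v"
  by (simp add: vec_eq_iff bs_mv)

lemma magD: "j \<noteq> k \<Longrightarrow> x \<notin> {j,k} \<Longrightarrow> (bs_matrix j k *v v) $ x = v $ x"
  by (simp add: bs_mv)

lemma magC: "j \<noteq> k \<Longrightarrow> (\<bar>v$j\<bar> = a \<and> v$k = 0) \<or> (v$j = 0 \<and> \<bar>v$k\<bar> = a) \<Longrightarrow> x \<in> {j,k}
   \<Longrightarrow> \<bar>(bs_matrix j k *v v) $ x\<bar> = a / sqrt 2"
  by (auto simp: bs_mv abs_divide)

lemma onepart:
  fixes F F' :: "4 set"
  assumes "F \<union> F' = UNIV" "F \<inter> F' = {}" "card F = 2" "card F' = 2" "g1 \<noteq> g2"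
    "{g1,g2} \<noteq> F" "{g1,g2} \<noteq> F'"
  shows "g1 \<in> F \<longleftrightarrow> g2 \<notin> F"
proof -
  have c: "card {g1,g2} = 2" using assms(5) by simp
  have "\<not> (g1 \<in> F \<and> g2 \<in> F)"
  proof
    assume "g1 \<in> F \<and> g2 \<in> F"
    then have "{g1,g2} \<subseteq> F" by auto
    then have "{g1,g2} = F" using card_subset_eq[of F "{g1,g2}"] c assms(3) by simp
    then show False using assms(6) by simp
  qed
  moreover have "\<not> (g1 \<notin> F \<and> g2 \<notin> F)"
  proof
    assume "g1 \<notin> F \<and> g2 \<notin> F"
    then have "{g1,g2} \<subseteq> F'" using assms(1) by auto
    then have "{g1,g2} = F'" using card_subset_eq[of F' "{g1,g2}"] c assms(4) by simp
    then show False using assms(7) by simp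
  qed
  ultimately show ?thesis by blast
qed

lemma full4: "card (A::4 set) = 4 \<Longrightarrow> A = UNIV"
  using card_subset_eq[of UNIV A] by simp

lemma cover:
  fixes a b c d :: 4
  assumes "a \<noteq> b" "c \<noteq> d" "{a,b} \<inter> {c,d} = {}"
  shows "{a,b} \<union> {c,d} = UNIV"
proof -
  have "card ({a,b} \<union> {c,d}) = 4" using assms by (simp add: card_Un_disjoint)
  then show ?thesis by (rule full4)
qed

lemma compl: "A \<union> B = UNIV \<Longrightarrow> A \<inter> B = {} \<Longrightarrow> B = - A" by auto

lemma good:
  assumes d: "\<forall>i\<in>{1..4::nat}. j i \<noteq> k i"
    and D12: "{j 1, k 1} \<inter> {j 2, k 2} = {}" and D34: "{j 3, k 3} \<inter> {j 4, k 4} = {}"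
    and N1: "{j 3, k 3} \<noteq> {j 1, k 1}" and N2: "{j 3, k 3} \<noteq> {j 2, k 2}"
  shows "\<bar>network_matrix j k $ r $ c\<bar> = 1 / 2"
proof -
  have d1: "j 1 \<noteq> k 1" and d2: "j 2 \<noteq> k 2" and d3: "j 3 \<noteq> k 3" and d4: "j 4 \<noteq> k 4" using d by auto
  have U12: "{j 1, k 1} \<union> {j 2, k 2} = UNIV" by (rule cover[OF d1 d2 D12])
  have U34: "{j 3, k 3} \<union> {j 4, k 4} = UNIV" by (rule cover[OF d3 d4 D34])
  have c12: "{j 2, k 2} = - {j 1, k 1}" using U12 D12 by (rule compl)
  have c34: "{j 4, k 4} = - {j 3, k 3}" using U34 D34 by (rule compl)
  have N3: "{j 4, k 4} \<noteq> {j 1, k 1}"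
  proof
    assume "{j 4, k 4} = {j 1, k 1}"
    then have "{j 3, k 3} = {j 2, k 2}" using c12 c34 by (metis double_compl)
    then show False using N2 by simp
  qed
  have N4: "{j 4, k 4} \<noteq> {j 2, k 2}"
  proof
    assume "{j 4, k 4} = {j 2, k 2}"
    then have "{j 3, k 3} = {j 1, k 1}" using c12 c34 by (metis double_compl)
    then show False using N1 by simp
  qed
  define F where "F = (if c \<in> {j 1, k 1} then {j 1, k 1} else {j 2, k 2})"
  define F' where "F' = (if c \<in> {j 1, k 1} then {j 2, k 2} else {j 1, k 1})"
  have FF: "F \<union> F' = UNIV" "F \<inter> F' = {}" "card F = 2" "card F' = 2"
    using U12 D12 d1 d2 by (auto simp: F_def F'_def)
  define v where "v = bs_matrix (j 2) (k 2) *v (bs_matrix (j 1) (k 1) *v axis c 1)"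
  have prof: "\<bar>v $ x\<bar> = (if x \<in> F then 1 / sqrt 2 else 0)" for x
  proof (cases "c \<in> {j 1, k 1}")
    case True
    let ?u = "bs_matrix (j 1) (k 1) *v axis c 1"
    have "j 2 \<notin> {j 1, k 1}" "k 2 \<notin> {j 1, k 1}" using D12 by auto
    then have "?u $ j 2 = 0" "?u $ k 2 = 0" using magA[OF d1 True] by (metis abs_eq_0)+
    then have "v = ?u" unfolding v_def by (rule magB[OF d2])
    then show ?thesis using magA[OF d1 True, of x] True by (simp add: F_def)
  next
    case False
    then have c2: "c \<in> {j 2, k 2}" using U12 by auto
    have "bs_matrix (j 1) (k 1) *v axis c 1 = axis c 1"
      using False by (intro magB[OF d1]) (auto simp: axis_def)
    then show ?thesis using magA[OF d2 c2, of x] False by (simp add: v_def F_def)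
  qed
  have one3: "j 3 \<in> F \<longleftrightarrow> k 3 \<notin> F"
    by (rule onepart[OF FF d3]) (use N1 N2 in \<open>auto simp: F_def F'_def\<close>)
  have one4: "j 4 \<in> F \<longleftrightarrow> k 4 \<notin> F"
    by (rule onepart[OF FF d4]) (use N3 N4 in \<open>auto simp: F_def F'_def\<close>)
  have cond3: "(\<bar>v$j 3\<bar> = 1 / sqrt 2 \<and> v$k 3 = 0) \<or> (v$j 3 = 0 \<and> \<bar>v$k 3\<bar> = 1 / sqrt 2)"
    using prof[of "j 3"] prof[of "k 3"] one3 by (auto split: if_splits)
  have cond4: "(\<bar>v$j 4\<bar> = 1 / sqrt 2 \<and> v$k 4 = 0) \<or> (v$j 4 = 0 \<and> \<bar>v$k 4\<bar> = 1 / sqrt 2)"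
    using prof[of "j 4"] prof[of "k 4"] one4 by (auto split: if_splits)
  have M: "network_matrix j k $ r $ c = (bs_matrix (j 4) (k 4) *v (bs_matrix (j 3) (k 3) *v v)) $ r"
    by (simp add: net_col v_def)
  have h: "1 / sqrt 2 / sqrt 2 = (1/2::real)" by (simp add: field_simps)
  show ?thesis
  proof (cases "r \<in> {j 3, k 3}")
    case True
    then have "r \<notin> {j 4, k 4}" using D34 by auto
    then have "network_matrix j k $ r $ c = (bs_matrix (j 3) (k 3) *v v) $ r" using M magD[OF d4] by simp
    then show ?thesis using magC[OF d3 cond3 True] h by simp
  next
    case False
    then have r4: "r \<in> {j 4, k 4}" using U34 by auto
    let ?w = "bs_matrix (j 3) (k 3) *v v"
    have "j 4 \<notin> {j 3, k 3}" "k 4 \<notin> {j 3, k 3}" using D34 by auto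
    then have "?w $ j 4 = v $ j 4" "?w $ k 4 = v $ k 4" using magD[OF d3] by auto
    then have c4': "(\<bar>?w$j 4\<bar> = 1 / sqrt 2 \<and> ?w$k 4 = 0) \<or> (?w$j 4 = 0 \<and> \<bar>?w$k 4\<bar> = 1 / sqrt 2)"
      using cond4 by simp
    show ?thesis using magC[OF d4 c4' r4] h M by simp
  qed
qed


lemma ball14: "(\<forall>i\<in>{1..4::nat}. P i) \<longleftrightarrow> P 1 \<and> P 2 \<and> P 3 \<and> P 4"
proof -
  have "{1..4::nat} = {1,2,3,4}" by auto
  then show ?thesis by simp
qed

lemma lt_sets: "{1..<1::nat} = {}" "{1..<2::nat} = {1}" "{1..<3::nat} = {1,2}" "{1..<4::nat} = {1,2,3}"
  by auto

lemma card14: "card {i\<in>{1..4::nat}. P i} =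
   (if P 1 then 1 else 0) + (if P 2 then 1 else 0) + (if P 3 then 1 else 0) + (if P 4 then (1::nat) else 0)"
proof -
  have e: "{1..4::nat} = {1,2,3,4}" by auto
  have "card {i\<in>{1..4::nat}. P i} = (\<Sum>i\<in>{i\<in>{1..4::nat}. P i}. (1::nat))" by simp
  also have "\<dots> = (\<Sum>i\<in>{1..4::nat}. if P i then 1 else 0)" by (rule sum.inter_filter) simp
  also have "\<dots> = (if P 1 then 1 else 0) + (if P 2 then 1 else 0) + (if P 3 then 1 else 0) + (if P 4 then (1::nat) else 0)"
    unfolding e by simp
  finally show ?thesis .
qed

lemma comb:
  fixes j k :: "nat \<Rightarrow> 4"
  assumes d: "\<forall>i\<in>{1..4::nat}. j i \<noteq> k i"
  shows "((\<forall>m::4. card {i\<in>{1..4::nat}. m = j i \<or> m = k i} = 2) \<and>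
    (\<forall>i\<in>{1..4::nat}. (\<exists>i'\<in>{1..<i}. {j i, k i} \<inter> {j i', k i'} \<noteq> {}) \<longrightarrow>
        (\<forall>m::4. \<exists>i'\<in>{1..<i}. m = j i' \<or> m = k i')) \<and>
    (\<forall>i\<in>{1..4::nat}. \<forall>i'\<in>{1..4::nat}. i \<noteq> i' \<longrightarrow> {j i, k i} \<noteq> {j i', k i'}))
   \<longleftrightarrow> ({j 1, k 1} \<inter> {j 2, k 2} = {} \<and> {j 3, k 3} \<inter> {j 4, k 4} = {} \<and>
        {j 3, k 3} \<noteq> {j 1, k 1} \<and> {j 3, k 3} \<noteq> {j 2, k 2})" (is "?R \<longleftrightarrow> ?Q")
proof
  have d1: "j 1 \<noteq> k 1" and d2: "j 2 \<noteq> k 2" and d3: "j 3 \<noteq> k 3" and d4: "j 4 \<noteq> k 4" using d by auto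
  assume R: ?R
  have R1: "\<And>m. card {i\<in>{1..4::nat}. m = j i \<or> m = k i} = 2" using R by blast
  have R2full: "\<forall>i\<in>{1..4::nat}. (\<exists>i'\<in>{1..<i}. {j i, k i} \<inter> {j i', k i'} \<noteq> {}) \<longrightarrow>
        (\<forall>m::4. \<exists>i'\<in>{1..<i}. m = j i' \<or> m = k i')" using R by blast
  have two: "2 \<in> {1..4::nat}" by simp
  have R2a: "(\<exists>i'\<in>{1..<2::nat}. {j 2, k 2} \<inter> {j i', k i'} \<noteq> {}) \<longrightarrow>
        (\<forall>m::4. \<exists>i'\<in>{1..<2::nat}. m = j i' \<or> m = k i')" using bspec[OF R2full two] .
  have R2: "({j 2, k 2} \<inter> {j 1, k 1} \<noteq> {}) \<longrightarrow> (\<forall>m::4. m = j 1 \<or> m = k 1)"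
    using R2a unfolding lt_sets by blast
  have R3: "{j 3, k 3} \<noteq> {j 1, k 1}" "{j 3, k 3} \<noteq> {j 2, k 2}" using R by (simp_all add: ball14)
  have D12: "{j 1, k 1} \<inter> {j 2, k 2} = {}"
  proof (rule ccontr)
    assume "{j 1, k 1} \<inter> {j 2, k 2} \<noteq> {}"
    then have "\<forall>m::4. m = j 1 \<or> m = k 1" using R2 by blast
    moreover have "card {j 1, k 1} < 4" using card_le2[of "j 1" "k 1"] by linarith
    then obtain m where "m \<notin> {j 1, k 1}" using exists_out by blast
    ultimately show False by blast
  qed
  have U12: "{j 1, k 1} \<union> {j 2, k 2} = UNIV" by (rule cover[OF d1 d2 D12])
  have D34: "{j 3, k 3} \<inter> {j 4, k 4} = {}"
  proof (rule ccontr)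
    assume "{j 3, k 3} \<inter> {j 4, k 4} \<noteq> {}"
    then obtain m where m3: "m = j 3 \<or> m = k 3" and m4: "m = j 4 \<or> m = k 4" by blast
    have m12: "(m = j 1 \<or> m = k 1) \<or> (m = j 2 \<or> m = k 2)" using U12 by blast
    have "card {i\<in>{1..4::nat}. m = j i \<or> m = k i} \<ge> 3"
      unfolding card14 using m3 m4 m12 by auto
    then show False using R1[of m] by simp
  qed
  show ?Q using D12 D34 R3 by blast
next
  have d1: "j 1 \<noteq> k 1" and d2: "j 2 \<noteq> k 2" and d3: "j 3 \<noteq> k 3" and d4: "j 4 \<noteq> k 4" using d by auto
  assume Q: ?Q
  then have D12: "{j 1, k 1} \<inter> {j 2, k 2} = {}" and D34: "{j 3, k 3} \<inter> {j 4, k 4} = {}"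
    and N1: "{j 3, k 3} \<noteq> {j 1, k 1}" and N2: "{j 3, k 3} \<noteq> {j 2, k 2}" by auto
  have U12: "{j 1, k 1} \<union> {j 2, k 2} = UNIV" by (rule cover[OF d1 d2 D12])
  have U34: "{j 3, k 3} \<union> {j 4, k 4} = UNIV" by (rule cover[OF d3 d4 D34])
  have c12: "{j 2, k 2} = - {j 1, k 1}" using U12 D12 by (rule compl)
  have c34: "{j 4, k 4} = - {j 3, k 3}" using U34 D34 by (rule compl)
  have N3: "{j 4, k 4} \<noteq> {j 1, k 1}"
  proof
    assume "{j 4, k 4} = {j 1, k 1}"
    then have "{j 3, k 3} = {j 2, k 2}" using c12 c34 by (metis double_compl)
    then show False using N2 by simp
  qed
  have N4: "{j 4, k 4} \<noteq> {j 2, k 2}"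
  proof
    assume "{j 4, k 4} = {j 2, k 2}"
    then have "{j 3, k 3} = {j 1, k 1}" using c12 c34 by (metis double_compl)
    then show False using N1 by simp
  qed
  have N5: "{j 1, k 1} \<noteq> {j 2, k 2}" using D12 by auto
  have N6: "{j 3, k 3} \<noteq> {j 4, k 4}" using D34 by auto
  have P1: "card {i\<in>{1..4::nat}. m = j i \<or> m = k i} = 2" for m
  proof -
    have a: "(m = j 1 \<or> m = k 1) \<noteq> (m = j 2 \<or> m = k 2)" using U12 D12 by blast
    have b: "(m = j 3 \<or> m = k 3) \<noteq> (m = j 4 \<or> m = k 4)" using U34 D34 by blast
    show ?thesis unfolding card14 using a b by auto
  qed
  have P2: "\<forall>m::4. \<exists>i'\<in>{1,2::nat}. m = j i' \<or> m = k i'" using U12 by blast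
  have P2': "\<forall>m::4. \<exists>i'\<in>{1,2,3::nat}. m = j i' \<or> m = k i'" using U12 by blast
  have P3: "\<forall>i\<in>{1..4::nat}. \<forall>i'\<in>{1..4::nat}. i \<noteq> i' \<longrightarrow> {j i, k i} \<noteq> {j i', k i'}"
    unfolding ball14 using N1 N2 N3 N4 N5 N6 by metis
  have A: "\<forall>m::4. card {i\<in>{1..4::nat}. m = j i \<or> m = k i} = 2" using P1 by blast
  have B: "\<forall>i\<in>{1..4::nat}. (\<exists>i'\<in>{1..<i}. {j i, k i} \<inter> {j i', k i'} \<noteq> {}) \<longrightarrow>
        (\<forall>m::4. \<exists>i'\<in>{1..<i}. m = j i' \<or> m = k i')"
    unfolding ball14 lt_sets using P2 P2' D12 by (simp add: Int_commute)
  show ?R using A B P3 by blast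
qed


theorem theorem2:
  fixes j k :: "nat \<Rightarrow> 4"
  assumes distinct: "\<forall>i\<in>{1..4::nat}. j i \<noteq> k i"
  shows "real_balanced_four_splitter (network_matrix j k) \<longleftrightarrow>
    (\<forall>m::4. card {i\<in>{1..4::nat}. m = j i \<or> m = k i} = 2) \<and>
    (\<forall>i\<in>{1..4::nat}. (\<exists>i'\<in>{1..<i}. {j i, k i} \<inter> {j i', k i'} \<noteq> {}) \<longrightarrow>
        (\<forall>m::4. \<exists>i'\<in>{1..<i}. m = j i' \<or> m = k i')) \<and>
    (\<forall>i\<in>{1..4::nat}. \<forall>i'\<in>{1..4::nat}. i \<noteq> i' \<longrightarrow> {j i, k i} \<noteq> {j i', k i'})"
proof -
  have d1: "j 1 \<noteq> k 1" and d2: "j 2 \<noteq> k 2" and d3: "j 3 \<noteq> k 3" and d4: "j 4 \<noteq> k 4"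
    using distinct by auto
  have L: "real_balanced_four_splitter (network_matrix j k) \<longleftrightarrow>
     ({j 1, k 1} \<inter> {j 2, k 2} = {} \<and> {j 3, k 3} \<inter> {j 4, k 4} = {} \<and>
        {j 3, k 3} \<noteq> {j 1, k 1} \<and> {j 3, k 3} \<noteq> {j 2, k 2})"
  proof
    assume bal: "real_balanced_four_splitter (network_matrix j k)"
    have nz: "\<not> (\<exists>r c. network_matrix j k $ r $ c = 0)" using balanced_nz[OF bal] by blast
    have D12: "{j 1, k 1} \<inter> {j 2, k 2} = {}" using bad12[OF distinct] nz by blast
    have D34: "{j 3, k 3} \<inter> {j 4, k 4} = {}" using bad34[OF distinct] nz by blast
    have U12: "{j 1, k 1} \<union> {j 2, k 2} = UNIV" by (rule cover[OF d1 d2 D12])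
    have U34: "{j 3, k 3} \<union> {j 4, k 4} = UNIV" by (rule cover[OF d3 d4 D34])
    have c12: "{j 2, k 2} = - {j 1, k 1}" using U12 D12 by (rule compl)
    have c34: "{j 4, k 4} = - {j 3, k 3}" using U34 D34 by (rule compl)
    have N: "{j 3, k 3} \<noteq> {j 1, k 1} \<and> {j 3, k 3} \<noteq> {j 2, k 2}"
    proof (rule ccontr)
      assume "\<not> ({j 3, k 3} \<noteq> {j 1, k 1} \<and> {j 3, k 3} \<noteq> {j 2, k 2})"
      then have E3: "{j 3, k 3} = {j 1, k 1} \<or> {j 3, k 3} = - {j 1, k 1}" using c12 by auto
      have h2: "{j 2, k 2} \<subseteq> {j 1, k 1} \<or> {j 2, k 2} \<inter> {j 1, k 1} = {}" using D12 by blast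
      have h3: "{j 3, k 3} \<subseteq> {j 1, k 1} \<or> {j 3, k 3} \<inter> {j 1, k 1} = {}" using E3 by auto
      have h4: "{j 4, k 4} \<subseteq> {j 1, k 1} \<or> {j 4, k 4} \<inter> {j 1, k 1} = {}" using E3 c34 by auto
      have "\<forall>i\<in>{2,3,4::nat}. {j i, k i} \<subseteq> {j 1, k 1} \<or> {j i, k i} \<inter> {j 1, k 1} = {}"
        using h2 h3 h4 by simp
      then show False using bad_eq[OF distinct] nz by blast
    qed
    show "{j 1, k 1} \<inter> {j 2, k 2} = {} \<and> {j 3, k 3} \<inter> {j 4, k 4} = {} \<and>
        {j 3, k 3} \<noteq> {j 1, k 1} \<and> {j 3, k 3} \<noteq> {j 2, k 2}" using D12 D34 N by blast
  next
    assume Q: "{j 1, k 1} \<inter> {j 2, k 2} = {} \<and> {j 3, k 3} \<inter> {j 4, k 4} = {} \<and>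
        {j 3, k 3} \<noteq> {j 1, k 1} \<and> {j 3, k 3} \<noteq> {j 2, k 2}"
    have orth: "orthogonal_matrix (network_matrix j k)"
      unfolding network_matrix_def
      by (intro orthogonal_matrix_mul bs_orth d1 d2 d3 d4)
    have h: "\<bar>network_matrix j k $ r $ c\<bar> = 1 / 2" for r c
      using good[OF distinct] Q by blast
    have "\<forall>a b c d. \<bar>network_matrix j k $ a $ b\<bar> = \<bar>network_matrix j k $ c $ d\<bar>"
      by (simp only: h simp_thms)
    then show "real_balanced_four_splitter (network_matrix j k)"
      unfolding real_balanced_four_splitter_def using orth by blast
  qed
  show ?thesis unfolding L comb[OF distinct] ..
qed

end
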